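(* Let $g\colon\mathbb X\to\mathbb Y$ be continuous and calm in direction $u\in\mathbb S_{\mathbb X}$ at $\bar x\in\mathbb X$, let $D\subset\mathbb Y$ be closed, let $\Phi(x):=g(x)-D$, and assume $(\bar x,0)\in\operatorname{gph}\Phi$. Let $\{e_1,\dots,e_m\}$ be an orthonormal basis of $\mathbb Y$. Suppose there do not exist a direction $v\in\mathbb Y$ and a nonzero $\lambda\in\mathcal N_D(g(\bar x);v)$ with $0\in D^*g(\bar x;(u,v))(\lambda)$ for which there are sequences $\{x_k\}\subset\mathbb X$ with $x_k\ne\bar x$, $\{z_k\}\subset D$, $\{\lambda_k\}\subset\mathbb Y$, $\{\eta_k\}\subset\mathbb X$ such that $x_k\to\bar x$, $z_k\to g(\bar x)$, $\lambda_k\to\lambda$, $\eta_k\to0$, $(x_k-\bar x)/\|x_k-\bar x\|\to u$, $(z_k-g(\bar x))/\|x_k-\bar x\|\to v$, $(g(x_k)-g(\bar x))/\|x_k-\bar x\|\to v$, and for all $k$ and $i\in\{1,\dots,m\}$: $\eta_k\in\widehat D^*g(x_k)(\lambda_k)$, $\lambda_k\in\widehat{\mathcal N}_D(z_k)$, and $\langle\lambda,e_i\rangle\langle g(x_k)-z_k,e_i\rangle>0$ whenever $\langle\lambda,e_i\rangle\ne0$. Then $\Phi$ is quasi-normal in direction $u$ at $(\bar x,0)$ w.r.t. $\{e_1,\dots,e_m\}$. Moreover, if $g$ is calm at every point of a neighbourhood of $\bar x$ (e.g. Lipschitz continuous near $\bar x$), the two conditions are equivalent.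
   Context: $\widehat{\mathcal N}_D$ regular normal cone; $\mathcal N_D(y;v)$ directional limiting normal cone (limits of $\eta_k\in\widehat{\mathcal N}_D(y+t_kv_k)$, $v_k\to v$, $t_k\searrow0$). Regular coderivative $\widehat D^*g(x)(y^* )=\{x^*\mid(x^*,-y^* )\in\widehat{\mathcal N}_{\operatorname{gph}g}(x,g(x))\}$; directional limiting coderivative $D^*g(\bar x;(u,v))(y^* )=\{x^*\mid(x^*,-y^* )\in\mathcal N_{\operatorname{gph}g}((\bar x,g(\bar x));(u,v))\}$; analogously for $\Phi$. $g$ is calm in direction $u$ at $\bar x$ if there are $\varepsilon,\delta,L>0$ with $\|g(x')-g(\bar x)\|\le L\|x'-\bar x\|$ for all $x'\in\bar x+\mathbb B_{\varepsilon,\delta}(u)$, $\mathbb B_{\varepsilon,\delta}(u)=\{v\mid\|\|v\|u-\|u\|v\|\le\delta\|u\|\|v\|,\ \|v\|\le\varepsilon\}$; calm at $x$ means $\|g(x')-g(x)\|\le L\|x'-x\|$ for $x'$ near $x$. Quasi-normality in direction $u$ at $(\bar x,\bar y)$ w.r.t. $\{e_i\}$: there is no nonzero $\lambda$ with $0\in D^*\Phi((\bar x,\bar y);(u,0))(\lambda)$ for which there exist $\{(x_k,y_k)\}\subset\operatorname{gph}\Phi$ with $x_k\ne\bar x$, $\{\lambda_k\}$, $\{\eta_k\}$ with $x_k\to\bar x$, $y_k\to\bar y$, $\lambda_k\to\lambda$, $\eta_k\to0$, $(x_k-\bar x)/\|x_k-\bar x\|\to u$, $(y_k-\bar y)/\|x_k-\bar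 x\|\to0$, $\eta_k\in\widehat D^*\Phi(x_k,y_k)(\lambda_k)$, and $\langle\lambda,e_i\rangle\langle y_k-\bar y,e_i\rangle>0$ whenever $\langle\lambda,e_i\rangle\ne0$. *)

theory Defs
  imports "HOL-Analysis.Analysis"
begin

definition reg_normal_cone :: "'a::euclidean_space set \<Rightarrow> 'a \<Rightarrow> 'a set" where
  "reg_normal_cone D y =
     (if y \<in> D then {eta. \<forall>e>0. \<exists>d>0. \<forall>y'\<in>D. norm (y' - y) < d \<longrightarrow>
                         inner eta (y' - y) \<le> e * norm (y' - y)}
      else {})"

definition dir_normal_cone :: "'a::euclidean_space set \<Rightarrow> 'a \<Rightarrow> 'a \<Rightarrow> 'a set" where
  "dir_normal_cone D y v = {eta. \<exists>t vs etas.
      (\<forall>k. t k > 0) \<and> t \<longlonglongrightarrow> 0 \<and> vs \<longlonglongrightarrow> v \<and> etas \<longlonglongrightarrow> eta \<and>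
      (\<forall>k. etas k \<in> reg_normal_cone D (y + t k *\<^sub>R vs k))}"

definition graph_fun :: "('a \<Rightarrow> 'b) \<Rightarrow> ('a \<times> 'b) set" where
  "graph_fun g = {(x, g x) | x. True}"

definition graph_mult :: "('a \<Rightarrow> 'b set) \<Rightarrow> ('a \<times> 'b) set" where
  "graph_mult Phi = {(x, y). y \<in> Phi x}"

definition reg_coderiv :: "('a::euclidean_space \<Rightarrow> 'b::euclidean_space) \<Rightarrow> 'a \<Rightarrow> 'b \<Rightarrow> 'a set" where
  "reg_coderiv g x ystar = {xstar. (xstar, - ystar) \<in> reg_normal_cone (graph_fun g) (x, g x)}"

definition dir_coderiv :: "('a::euclidean_space \<Rightarrow> 'b::euclidean_space) \<Rightarrow> 'a \<Rightarrow> 'a \<Rightarrow> 'b \<Rightarrow> 'b \<Rightarrow> 'a set" where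
  "dir_coderiv g x u v ystar =
     {xstar. (xstar, - ystar) \<in> dir_normal_cone (graph_fun g) (x, g x) (u, v)}"

definition reg_coderiv_m :: "('a::euclidean_space \<Rightarrow> 'b::euclidean_space set) \<Rightarrow> 'a \<Rightarrow> 'b \<Rightarrow> 'b \<Rightarrow> 'a set" where
  "reg_coderiv_m Phi x y ystar = {xstar. (xstar, - ystar) \<in> reg_normal_cone (graph_mult Phi) (x, y)}"

definition dir_coderiv_m :: "('a::euclidean_space \<Rightarrow> 'b::euclidean_space set) \<Rightarrow> 'a \<Rightarrow> 'b \<Rightarrow> 'a \<Rightarrow> 'b \<Rightarrow> 'b \<Rightarrow> 'a set" where
  "dir_coderiv_m Phi x y u v ystar =
     {xstar. (xstar, - ystar) \<in> dir_normal_cone (graph_mult Phi) (x, y) (u, v)}"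

definition dir_nbhd :: "real \<Rightarrow> real \<Rightarrow> 'a::real_normed_vector \<Rightarrow> 'a set" where
  "dir_nbhd eps delta u = {v. norm (norm v *\<^sub>R u - norm u *\<^sub>R v) \<le> delta * norm u * norm v \<and> norm v \<le> eps}"

definition calm_in_dir :: "('a::real_normed_vector \<Rightarrow> 'b::real_normed_vector) \<Rightarrow> 'a \<Rightarrow> 'a \<Rightarrow> bool" where
  "calm_in_dir g xb u \<longleftrightarrow> (\<exists>eps>0. \<exists>delta>0. \<exists>L>0. \<forall>w\<in>dir_nbhd eps delta u.
       norm (g (xb + w) - g xb) \<le> L * norm w)"

definition calm_at :: "('a::real_normed_vector \<Rightarrow> 'b::real_normed_vector) \<Rightarrow> 'a \<Rightarrow> bool" where
  "calm_at g x \<longleftrightarrow> (\<exists>r>0. \<exists>L>0. \<forall>x'. norm (x' - x) < r \<longrightarrow> norm (g x' - g x) \<le> L * norm (x' - x))"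

definition orthonormal_basis :: "'b::euclidean_space set \<Rightarrow> bool" where
  "orthonormal_basis E \<longleftrightarrow> finite E \<and> (\<forall>e\<in>E. norm e = 1) \<and>
     (\<forall>e\<in>E. \<forall>e'\<in>E. e \<noteq> e' \<longrightarrow> inner e e' = 0) \<and> span E = UNIV"

definition quasi_normal_dir ::
  "('a::euclidean_space \<Rightarrow> 'b::euclidean_space set) \<Rightarrow> 'a \<Rightarrow> 'b \<Rightarrow> 'a \<Rightarrow> 'b set \<Rightarrow> bool" where
  "quasi_normal_dir Phi xb yb u E \<longleftrightarrow>
     \<not> (\<exists>lam. lam \<noteq> 0 \<and> 0 \<in> dir_coderiv_m Phi xb yb u 0 lam \<and>
        (\<exists>x y lams etas.
           (\<forall>k. (x k, y k) \<in> graph_mult Phi \<and> x k \<noteq> xb) \<and>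
           x \<longlonglongrightarrow> xb \<and> y \<longlonglongrightarrow> yb \<and> lams \<longlonglongrightarrow> lam \<and> etas \<longlonglongrightarrow> 0 \<and>
           (\<lambda>k. (1 / norm (x k - xb)) *\<^sub>R (x k - xb)) \<longlonglongrightarrow> u \<and>
           (\<lambda>k. (1 / norm (x k - xb)) *\<^sub>R (y k - yb)) \<longlonglongrightarrow> 0 \<and>
           (\<forall>k. etas k \<in> reg_coderiv_m Phi (x k) (y k) (lams k)) \<and>
           (\<forall>k. \<forall>e\<in>E. inner lam e \<noteq> 0 \<longrightarrow> inner lam e * inner (y k - yb) e > 0)))"

end

theory Submission
  imports Defs
begin

lemma regA:
  fixes g :: "'a::euclidean_space \<Rightarrow> 'b::euclidean_space"
  assumes H0: "(eta, - lam) \<in> reg_normal_cone (graph_mult (\<lambda>x. {g x - d | d. d \<in> D})) (x, y)"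
  shows "lam \<in> reg_normal_cone D (g x - y)" and "eta \<in> reg_coderiv g x lam"
proof -
  let ?G = "graph_mult (\<lambda>x. {g x - d | d. d \<in> D})"
  have inG: "(x,y) \<in> ?G" using H0 unfolding reg_normal_cone_def by (auto split: if_splits)
  have H: "\<forall>e>0. \<exists>d>0. \<forall>p\<in>?G. norm (p - (x,y)) < d \<longrightarrow> inner (eta, -lam) (p - (x,y)) \<le> e * norm (p - (x,y))"
    using H0 inG unfolding reg_normal_cone_def by simp
  have zD: "g x - y \<in> D" using inG unfolding graph_mult_def by auto
  show "lam \<in> reg_normal_cone D (g x - y)"
    unfolding reg_normal_cone_def
  proof (simp add: zD, intro allI impI)
    fix e :: real assume "e > 0"
    then obtain d where d: "d > 0" "\<forall>p\<in>?G. norm (p - (x,y)) < d \<longrightarrow> inner (eta, -lam) (p - (x,y)) \<le> e * norm (p - (x,y))"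
      using H by blast
    show "\<exists>d>0. \<forall>y'\<in>D. norm (y' - (g x - y)) < d \<longrightarrow> inner lam (y' - (g x - y)) \<le> e * norm (y' - (g x - y))"
    proof (intro exI[of _ d] conjI ballI impI)
      fix y' assume y': "y' \<in> D" "norm (y' - (g x - y)) < d"
      have pG: "(x, g x - y') \<in> ?G" using y' unfolding graph_mult_def by auto
      have eq: "(x, g x - y') - (x,y) = (0, - (y' - (g x - y)))" by (simp add: algebra_simps)
      have "norm ((x, g x - y') - (x,y)) < d" unfolding eq using y' by (simp del: minus_diff_eq)
      with d pG have "inner (eta, -lam) ((x, g x - y') - (x,y)) \<le> e * norm ((x, g x - y') - (x,y))" by blast
      then show "inner lam (y' - (g x - y)) \<le> e * norm (y' - (g x - y))"
        unfolding eq by (simp del: minus_diff_eq)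
    qed (rule d(1))
  qed
  have xg: "(x, g x) \<in> graph_fun g" unfolding graph_fun_def by auto
  have "\<forall>e>0. \<exists>d>0. \<forall>p\<in>graph_fun g. norm (p - (x, g x)) < d \<longrightarrow> inner (eta, - lam) (p - (x, g x)) \<le> e * norm (p - (x, g x))"
  proof (intro allI impI)
    fix e :: real assume "e > 0"
    then obtain d where d: "d > 0" "\<forall>p\<in>?G. norm (p - (x,y)) < d \<longrightarrow> inner (eta, -lam) (p - (x,y)) \<le> e * norm (p - (x,y))"
      using H by blast
    show "\<exists>d>0. \<forall>p\<in>graph_fun g. norm (p - (x, g x)) < d \<longrightarrow> inner (eta, - lam) (p - (x, g x)) \<le> e * norm (p - (x, g x))"
    proof (intro exI[of _ d] conjI ballI impI)
      fix p assume p: "p \<in> graph_fun g" "norm (p - (x, g x)) < d"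
      then obtain a where b: "p = (a, g a)" unfolding graph_fun_def by auto
      have pG: "(a, g a - (g x - y)) \<in> ?G" using zD unfolding graph_mult_def by (auto intro!: exI[of _ "g x - y"])
      have eq: "(a, g a - (g x - y)) - (x,y) = p - (x, g x)" using b by (simp add: algebra_simps)
      show "inner (eta, - lam) (p - (x, g x)) \<le> e * norm (p - (x, g x))"
        using d pG p(2) unfolding eq[symmetric] by blast
    qed (rule d(1))
  qed
  then show "eta \<in> reg_coderiv g x lam"
    unfolding reg_coderiv_def reg_normal_cone_def using xg by simp
qed

lemma regB:
  fixes g :: "'a::euclidean_space \<Rightarrow> 'b::euclidean_space"
  assumes calm: "calm_at g x" and zD: "z \<in> D"
    and h1: "eta \<in> reg_coderiv g x lam" and h2: "lam \<in> reg_normal_cone D z"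
  shows "eta \<in> reg_coderiv_m (\<lambda>x. {g x - d | d. d \<in> D}) x (g x - z) lam"
proof -
  let ?G = "graph_mult (\<lambda>x. {g x - d | d. d \<in> D})"
  obtain r L where rL: "r > 0" "L > 0" "\<And>x'. norm (x' - x) < r \<Longrightarrow> norm (g x' - g x) \<le> L * norm (x' - x)"
    using calm unfolding calm_at_def by blast
  have xg: "(x, g x) \<in> graph_fun g" unfolding graph_fun_def by auto
  have H1: "\<forall>e>0. \<exists>d>0. \<forall>p\<in>graph_fun g. norm (p - (x, g x)) < d \<longrightarrow> inner (eta, - lam) (p - (x, g x)) \<le> e * norm (p - (x, g x))"
    using h1 xg unfolding reg_coderiv_def reg_normal_cone_def by simp
  have H2: "\<forall>e>0. \<exists>d>0. \<forall>y'\<in>D. norm (y' - z) < d \<longrightarrow> inner lam (y' - z) \<le> e * norm (y' - z)"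
    using h2 zD unfolding reg_normal_cone_def by simp
  have inG: "(x, g x - z) \<in> ?G" using zD unfolding graph_mult_def by auto
  have "\<forall>e>0. \<exists>d>0. \<forall>p\<in>?G. norm (p - (x, g x - z)) < d \<longrightarrow> inner (eta, - lam) (p - (x, g x - z)) \<le> e * norm (p - (x, g x - z))"
  proof (intro allI impI)
    fix e :: real assume e: "e > 0"
    define e' where "e' = e / (2 * (1 + L))"
    have e': "e' > 0" using e rL unfolding e'_def by simp
    obtain d1 where d1: "d1 > 0" "\<forall>p\<in>graph_fun g. norm (p - (x, g x)) < d1 \<longrightarrow> inner (eta, - lam) (p - (x, g x)) \<le> e' * norm (p - (x, g x))"
      using H1 e' by blast
    obtain d2 where d2: "d2 > 0" "\<forall>y'\<in>D. norm (y' - z) < d2 \<longrightarrow> inner lam (y' - z) \<le> e' * norm (y' - z)"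
      using H2 e' by blast
    define del where "del = min r (min (d1 / (1 + L)) (d2 / (1 + L)))"
    have del: "del > 0" using rL d1 d2 unfolding del_def by simp
    show "\<exists>d>0. \<forall>p\<in>?G. norm (p - (x, g x - z)) < d \<longrightarrow> inner (eta, - lam) (p - (x, g x - z)) \<le> e * norm (p - (x, g x - z))"
    proof (intro exI[of _ del] conjI ballI impI)
      fix p assume p: "p \<in> ?G" "norm (p - (x, g x - z)) < del"
      then obtain a d' where pa: "p = (a, g a - d')" and d'D: "d' \<in> D" unfolding graph_mult_def by auto
      define P where "P = norm (p - (x, g x - z))"
      define dx where "dx = a - x"
      define dy where "dy = (g a - d') - (g x - z)"
      have pd: "p - (x, g x - z) = (dx, dy)" unfolding pa dx_def dy_def by simp
      have ndx: "norm dx \<le> P" unfolding P_def pd by (rule norm_fst_le)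
      have ndy: "norm dy \<le> P" unfolding P_def pd by (rule norm_snd_le)
      have Pd: "P < del" using p(2) unfolding P_def .
      have "norm dx < r" using ndx Pd unfolding del_def by linarith
      then have ng: "norm (g a - g x) \<le> L * P"
        using rL(3)[of a] ndx rL(2) unfolding dx_def
        by (meson mult_left_mono order_trans less_imp_le)
      have q: "(a, g a) - (x, g x) = (dx, g a - g x)" unfolding dx_def by simp
      have nq: "norm ((a, g a) - (x, g x)) \<le> (1 + L) * P"
        unfolding q using norm_Pair_le[of dx "g a - g x"] ndx ng by (simp add: algebra_simps)
      have dz: "d' - z = (g a - g x) - dy" unfolding dy_def by (simp add: algebra_simps)
      have ndz: "norm (d' - z) \<le> (1 + L) * P"
        unfolding dz using norm_triangle_ineq4[of "g a - g x" dy] ndy ng by (simp add: algebra_simps)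
      have PdL: "(1 + L) * P < d1" "(1 + L) * P < d2"
      proof -
        have "(1 + L) * P < (1 + L) * del" using Pd rL by simp
        moreover have "(1 + L) * del \<le> (1 + L) * (d1 / (1 + L))" "(1 + L) * del \<le> (1 + L) * (d2 / (1 + L))"
          using rL unfolding del_def by (intro mult_left_mono; simp)+
        moreover have "(1 + L) * (d1 / (1 + L)) = d1" "(1 + L) * (d2 / (1 + L)) = d2" using rL by simp_all
        ultimately show "(1 + L) * P < d1" "(1 + L) * P < d2" by linarith+
      qed
      have agG: "(a, g a) \<in> graph_fun g" unfolding graph_fun_def by auto
      have i1: "inner (eta, - lam) ((a, g a) - (x, g x)) \<le> e' * norm ((a, g a) - (x, g x))"
        using d1(2) agG nq PdL(1) by auto
      have i2: "inner lam (d' - z) \<le> e' * norm (d' - z)"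
        using d2(2) d'D ndz PdL(2) by auto
      have split: "inner (eta, - lam) (p - (x, g x - z)) = inner (eta, - lam) ((a, g a) - (x, g x)) + inner lam (d' - z)"
        unfolding pd q dz by (simp add: inner_diff_right)
      have "inner (eta, - lam) (p - (x, g x - z)) \<le> e' * ((1 + L) * P) + e' * ((1 + L) * P)"
        using split i1 i2 nq ndz e' mult_left_mono[OF nq, of e'] mult_left_mono[OF ndz, of e'] by linarith
      also have "\<dots> = (e' * (2 * (1 + L))) * P" by (simp add: algebra_simps)
      also have "e' * (2 * (1 + L)) = e" unfolding e'_def using rL by simp
      finally show "inner (eta, - lam) (p - (x, g x - z)) \<le> e * norm (p - (x, g x - z))" unfolding P_def .
    qed (rule del)
  qed
  then show ?thesis using inG unfolding reg_coderiv_m_def reg_normal_cone_def by simp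
qed

lemma sub_lim: "(X \<longlonglongrightarrow> l) \<Longrightarrow> strict_mono s \<Longrightarrow> ((\<lambda>k. X (s k)) \<longlonglongrightarrow> l)"
  using LIMSEQ_subseq_LIMSEQ[of X l s] by (simp add: o_def)

lemma dir1:
  fixes g :: "'a::euclidean_space \<Rightarrow> 'b::euclidean_space"
  assumes cont: "continuous_on UNIV g" and unit: "norm u = 1" and calm: "calm_in_dir g xb u"
    and nqn: "\<not> quasi_normal_dir (\<lambda>x. {g x - d | d. d \<in> D}) xb 0 u E"
  shows "\<exists>v lam. lam \<noteq> 0 \<and> lam \<in> dir_normal_cone D (g xb) v \<and>
              0 \<in> dir_coderiv g xb u v lam \<and>
              (\<exists>x z lams etas.
                 (\<forall>k. x k \<noteq> xb \<and> z k \<in> D) \<and>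
                 x \<longlonglongrightarrow> xb \<and> z \<longlonglongrightarrow> g xb \<and> lams \<longlonglongrightarrow> lam \<and> etas \<longlonglongrightarrow> 0 \<and>
                 (\<lambda>k. (1 / norm (x k - xb)) *\<^sub>R (x k - xb)) \<longlonglongrightarrow> u \<and>
                 (\<lambda>k. (1 / norm (x k - xb)) *\<^sub>R (z k - g xb)) \<longlonglongrightarrow> v \<and>
                 (\<lambda>k. (1 / norm (x k - xb)) *\<^sub>R (g (x k) - g xb)) \<longlonglongrightarrow> v \<and>
                 (\<forall>k. etas k \<in> reg_coderiv g (x k) (lams k) \<and>
                      lams k \<in> reg_normal_cone D (z k) \<and>
                      (\<forall>e\<in>E. inner lam e \<noteq> 0 \<longrightarrow> inner lam e * inner (g (x k) - z k) e > 0)))"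
proof -
  let ?Phi = "\<lambda>x. {g x - d | d. d \<in> D}"
  obtain lam x y lams etas where lam0: "lam \<noteq> 0"
    and gr: "\<forall>k. (x k, y k) \<in> graph_mult ?Phi \<and> x k \<noteq> xb"
    and xl: "x \<longlonglongrightarrow> xb" and yl: "y \<longlonglongrightarrow> 0" and ll: "lams \<longlonglongrightarrow> lam" and el: "etas \<longlonglongrightarrow> 0"
    and ul: "(\<lambda>k. (1 / norm (x k - xb)) *\<^sub>R (x k - xb)) \<longlonglongrightarrow> u"
    and yq: "(\<lambda>k. (1 / norm (x k - xb)) *\<^sub>R (y k - 0)) \<longlonglongrightarrow> 0"
    and co: "\<forall>k. etas k \<in> reg_coderiv_m ?Phi (x k) (y k) (lams k)"
    and sg: "\<forall>k. \<forall>e\<in>E. inner lam e \<noteq> 0 \<longrightarrow> inner lam e * inner (y k - 0) e > 0"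
    using nqn unfolding quasi_normal_dir_def by blast
  obtain eps delta L where cl: "eps > 0" "delta > 0" "L > 0"
    "\<And>w. w \<in> dir_nbhd eps delta u \<Longrightarrow> norm (g (xb + w) - g xb) \<le> L * norm w"
    using calm unfolding calm_in_dir_def by blast
  define f where "f k = (1 / norm (x k - xb)) *\<^sub>R (g (x k) - g xb)" for k
  have ev1: "eventually (\<lambda>k. dist (x k) xb < eps) sequentially" using tendstoD[OF xl cl(1)] .
  have ev2: "eventually (\<lambda>k. dist ((1 / norm (x k - xb)) *\<^sub>R (x k - xb)) u < delta) sequentially"
    using tendstoD[OF ul cl(2)] .
  have "eventually (\<lambda>k. norm (f k) \<le> L) sequentially"
    using ev1 ev2
  proof eventually_elim
    case (elim k)
    define w where "w = x k - xb"
    have nw: "norm w > 0" using gr unfolding w_def by auto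
    have "norm (norm w *\<^sub>R u - norm u *\<^sub>R w) = norm (norm w *\<^sub>R (u - (1 / norm w) *\<^sub>R w))"
      using nw unit by (simp add: scaleR_diff_right)
    also have "\<dots> = norm w * norm (u - (1 / norm w) *\<^sub>R w)" by simp
    also have "\<dots> \<le> norm w * delta"
      using elim(2) nw unfolding w_def[symmetric] by (simp add: dist_norm norm_minus_commute)
    finally have "w \<in> dir_nbhd eps delta u"
      unfolding dir_nbhd_def using elim(1) unit unfolding w_def by (simp add: dist_norm mult.commute)
    then have "norm (g (xb + w) - g xb) \<le> L * norm w" by (rule cl(4))
    then have "norm (g (x k) - g xb) / norm w \<le> L" using nw unfolding w_def by (simp add: divide_le_eq)
    then show ?case unfolding f_def w_def[symmetric] by simp
  qed
  then obtain N where N: "\<And>k. k \<ge> N \<Longrightarrow> norm (f k) \<le> L" unfolding eventually_sequentially by blast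
  have "bounded (range (\<lambda>k. f (k + N)))" unfolding bounded_iff using N by (intro exI[of _ L]) auto
  then obtain v r where r: "strict_mono r" and rv: "((\<lambda>k. f (k + N)) \<circ> r) \<longlonglongrightarrow> v"
    using bounded_imp_convergent_subsequence by blast
  define s where "s k = r k + N" for k
  have s: "strict_mono s" using r unfolding s_def strict_mono_def by simp
  have fs: "(\<lambda>k. f (s k)) \<longlonglongrightarrow> v" using rv unfolding s_def o_def .
  define X where "X k = x (s k)" for k
  define Y where "Y k = y (s k)" for k
  define Z where "Z k = g (X k) - Y k" for k
  define T where "T k = norm (X k - xb)" for k
  have Tpos: "T k > 0" for k using gr unfolding T_def X_def by auto
  have Xl: "X \<longlonglongrightarrow> xb" unfolding X_def using sub_lim[OF xl s] .
  have Yl: "Y \<longlonglongrightarrow> 0" unfolding Y_def using sub_lim[OF yl s] .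
  have Tl: "T \<longlonglongrightarrow> 0"
    using tendsto_norm[OF tendsto_diff[OF Xl tendsto_const[of xb]]] unfolding T_def by simp
  have Uq: "(\<lambda>k. (1 / T k) *\<^sub>R (X k - xb)) \<longlonglongrightarrow> u" unfolding T_def X_def using sub_lim[OF ul s] .
  have Yq: "(\<lambda>k. (1 / T k) *\<^sub>R Y k) \<longlonglongrightarrow> 0" unfolding T_def X_def Y_def using sub_lim[OF yq s] by simp
  have Fq: "(\<lambda>k. (1 / T k) *\<^sub>R (g (X k) - g xb)) \<longlonglongrightarrow> v" using fs unfolding f_def T_def X_def .
  have Zq: "(\<lambda>k. (1 / T k) *\<^sub>R (Z k - g xb)) \<longlonglongrightarrow> v"
  proof -
    have "(\<lambda>k. (1 / T k) *\<^sub>R (g (X k) - g xb) - (1 / T k) *\<^sub>R Y k) \<longlonglongrightarrow> v - 0"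
      by (rule tendsto_diff[OF Fq Yq])
    then show ?thesis unfolding Z_def by (simp add: algebra_simps)
  qed
  have gc: "isCont g xb" using cont by (simp add: continuous_on_eq_continuous_at)
  have gX: "(\<lambda>k. g (X k)) \<longlonglongrightarrow> g xb" using isCont_tendsto_compose[OF gc Xl] .
  have Zl: "Z \<longlonglongrightarrow> g xb" using tendsto_diff[OF gX Yl] unfolding Z_def by simp
  have ZD: "Z k \<in> D" for k using gr[rule_format, of "s k"] unfolding Z_def Y_def X_def graph_mult_def by auto
  have Xne: "X k \<noteq> xb" for k using gr unfolding X_def by auto
  have RA: "lams (s k) \<in> reg_normal_cone D (Z k) \<and> etas (s k) \<in> reg_coderiv g (X k) (lams (s k))" for k
    using regA[of "etas (s k)" "lams (s k)" g D "X k" "Y k"] co unfolding reg_coderiv_m_def Z_def X_def Y_def by auto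
  have lsl: "(\<lambda>k. lams (s k)) \<longlonglongrightarrow> lam" using sub_lim[OF ll s] .
  have esl: "(\<lambda>k. etas (s k)) \<longlonglongrightarrow> 0" using sub_lim[OF el s] .
  have DN: "lam \<in> dir_normal_cone D (g xb) v"
    unfolding dir_normal_cone_def
  proof (intro CollectI exI conjI allI)
    show "\<And>k. T k > 0" by (rule Tpos)
    show "T \<longlonglongrightarrow> 0" by (rule Tl)
    show "(\<lambda>k. (1 / T k) *\<^sub>R (Z k - g xb)) \<longlonglongrightarrow> v" by (rule Zq)
    show "(\<lambda>k. lams (s k)) \<longlonglongrightarrow> lam" by (rule lsl)
    fix k
    have "g xb + T k *\<^sub>R ((1 / T k) *\<^sub>R (Z k - g xb)) = Z k" using Tpos[of k] by simp
    then show "lams (s k) \<in> reg_normal_cone D (g xb + T k *\<^sub>R ((1 / T k) *\<^sub>R (Z k - g xb)))"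
      using RA by simp
  qed
  have DC: "0 \<in> dir_coderiv g xb u v lam"
    unfolding dir_coderiv_def dir_normal_cone_def
  proof (intro CollectI exI conjI allI)
    show "\<And>k. T k > 0" by (rule Tpos)
    show "T \<longlonglongrightarrow> 0" by (rule Tl)
    show "(\<lambda>k. ((1 / T k) *\<^sub>R (X k - xb), (1 / T k) *\<^sub>R (g (X k) - g xb))) \<longlonglongrightarrow> (u, v)"
      by (rule tendsto_Pair[OF Uq Fq])
    show "(\<lambda>k. (etas (s k), - lams (s k))) \<longlonglongrightarrow> (0, - lam)"
      by (rule tendsto_Pair[OF esl tendsto_minus[OF lsl]])
    fix k
    have "(xb, g xb) + T k *\<^sub>R ((1 / T k) *\<^sub>R (X k - xb), (1 / T k) *\<^sub>R (g (X k) - g xb)) = (X k, g (X k))"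
      using Tpos[of k] by simp
    then show "(etas (s k), - lams (s k)) \<in> reg_normal_cone (graph_fun g) ((xb, g xb) + T k *\<^sub>R ((1 / T k) *\<^sub>R (X k - xb), (1 / T k) *\<^sub>R (g (X k) - g xb)))"
      using RA unfolding reg_coderiv_def by simp
  qed
  have SG: "\<forall>k. \<forall>e\<in>E. inner lam e \<noteq> 0 \<longrightarrow> inner lam e * inner (g (X k) - Z k) e > 0"
    using sg unfolding Z_def Y_def by simp
  show ?thesis
    apply (rule exI[of _ v], rule exI[of _ lam])
    apply (intro conjI lam0 DN DC)
    apply (rule exI[of _ X], rule exI[of _ Z], rule exI[of _ "\<lambda>k. lams (s k)"], rule exI[of _ "\<lambda>k. etas (s k)"])
    using Xne ZD Xl Zl lsl esl Uq Zq Fq RA SG unfolding T_def by auto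
qed

lemma dir2:
  fixes g :: "'a::euclidean_space \<Rightarrow> 'b::euclidean_space"
  assumes cont: "continuous_on UNIV g"
    and calmnear: "\<exists>r>0. \<forall>x. norm (x - xb) < r \<longrightarrow> calm_at g x"
    and C: "\<exists>v lam. lam \<noteq> 0 \<and> lam \<in> dir_normal_cone D (g xb) v \<and>
              0 \<in> dir_coderiv g xb u v lam \<and>
              (\<exists>x z lams etas.
                 (\<forall>k. x k \<noteq> xb \<and> z k \<in> D) \<and>
                 x \<longlonglongrightarrow> xb \<and> z \<longlonglongrightarrow> g xb \<and> lams \<longlonglongrightarrow> lam \<and> etas \<longlonglongrightarrow> 0 \<and>
                 (\<lambda>k. (1 / norm (x k - xb)) *\<^sub>R (x k - xb)) \<longlonglongrightarrow> u \<and>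
                 (\<lambda>k. (1 / norm (x k - xb)) *\<^sub>R (z k - g xb)) \<longlonglongrightarrow> v \<and>
                 (\<lambda>k. (1 / norm (x k - xb)) *\<^sub>R (g (x k) - g xb)) \<longlonglongrightarrow> v \<and>
                 (\<forall>k. etas k \<in> reg_coderiv g (x k) (lams k) \<and>
                      lams k \<in> reg_normal_cone D (z k) \<and>
                      (\<forall>e\<in>E. inner lam e \<noteq> 0 \<longrightarrow> inner lam e * inner (g (x k) - z k) e > 0)))"
  shows "\<not> quasi_normal_dir (\<lambda>x. {g x - d | d. d \<in> D}) xb 0 u E"
proof -
  let ?Phi = "\<lambda>x. {g x - d | d. d \<in> D}"
  obtain v lam x z lams etas where lam0: "lam \<noteq> 0"
    and xz: "\<forall>k. x k \<noteq> xb \<and> z k \<in> D"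
    and xl: "x \<longlonglongrightarrow> xb" and zl: "z \<longlonglongrightarrow> g xb" and ll: "lams \<longlonglongrightarrow> lam" and el: "etas \<longlonglongrightarrow> 0"
    and ul: "(\<lambda>k. (1 / norm (x k - xb)) *\<^sub>R (x k - xb)) \<longlonglongrightarrow> u"
    and zq: "(\<lambda>k. (1 / norm (x k - xb)) *\<^sub>R (z k - g xb)) \<longlonglongrightarrow> v"
    and gq: "(\<lambda>k. (1 / norm (x k - xb)) *\<^sub>R (g (x k) - g xb)) \<longlonglongrightarrow> v"
    and rest: "\<forall>k. etas k \<in> reg_coderiv g (x k) (lams k) \<and>
                      lams k \<in> reg_normal_cone D (z k) \<and>
                      (\<forall>e\<in>E. inner lam e \<noteq> 0 \<longrightarrow> inner lam e * inner (g (x k) - z k) e > 0)"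
    using C by blast
  obtain r0 where r0: "r0 > 0" "\<And>x. norm (x - xb) < r0 \<Longrightarrow> calm_at g x" using calmnear by blast
  obtain N where N: "\<And>k. k \<ge> N \<Longrightarrow> dist (x k) xb < r0"
    using tendstoD[OF xl r0(1)] unfolding eventually_sequentially by blast
  define s where "s k = k + N" for k
  have s: "strict_mono s" unfolding s_def strict_mono_def by simp
  define X where "X k = x (s k)" for k
  define Zs where "Zs k = z (s k)" for k
  define Y where "Y k = g (X k) - Zs k" for k
  define T where "T k = norm (X k - xb)" for k
  have Tpos: "T k > 0" for k using xz unfolding T_def X_def by auto
  have Xl: "X \<longlonglongrightarrow> xb" unfolding X_def using sub_lim[OF xl s] .
  have Zl: "Zs \<longlonglongrightarrow> g xb" unfolding Zs_def using sub_lim[OF zl s] .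
  have gc: "isCont g xb" using cont by (simp add: continuous_on_eq_continuous_at)
  have gX: "(\<lambda>k. g (X k)) \<longlonglongrightarrow> g xb" using isCont_tendsto_compose[OF gc Xl] .
  have Yl: "Y \<longlonglongrightarrow> 0" using tendsto_diff[OF gX Zl] unfolding Y_def by simp
  have Uq: "(\<lambda>k. (1 / T k) *\<^sub>R (X k - xb)) \<longlonglongrightarrow> u" unfolding T_def X_def using sub_lim[OF ul s] .
  have Fq: "(\<lambda>k. (1 / T k) *\<^sub>R (g (X k) - g xb)) \<longlonglongrightarrow> v" unfolding T_def X_def using sub_lim[OF gq s] .
  have Zq: "(\<lambda>k. (1 / T k) *\<^sub>R (Zs k - g xb)) \<longlonglongrightarrow> v" unfolding T_def X_def Zs_def using sub_lim[OF zq s] .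
  have Yq: "(\<lambda>k. (1 / T k) *\<^sub>R Y k) \<longlonglongrightarrow> 0"
  proof -
    have "(\<lambda>k. (1 / T k) *\<^sub>R (g (X k) - g xb) - (1 / T k) *\<^sub>R (Zs k - g xb)) \<longlonglongrightarrow> v - v"
      by (rule tendsto_diff[OF Fq Zq])
    then show ?thesis unfolding Y_def by (simp add: algebra_simps)
  qed
  have lsl: "(\<lambda>k. lams (s k)) \<longlonglongrightarrow> lam" using sub_lim[OF ll s] .
  have esl: "(\<lambda>k. etas (s k)) \<longlonglongrightarrow> 0" using sub_lim[OF el s] .
  have calmX: "calm_at g (X k)" for k
    using r0(2) N[of "s k"] unfolding X_def s_def by (simp add: dist_norm)
  have RB: "etas (s k) \<in> reg_coderiv_m ?Phi (X k) (Y k) (lams (s k))" for k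
    using regB[OF calmX, where z="Zs k" and D=D and eta="etas (s k)" and lam="lams (s k)"] xz rest unfolding Y_def Zs_def X_def by auto
  have gr: "(X k, Y k) \<in> graph_mult ?Phi" for k
    using xz unfolding graph_mult_def Y_def Zs_def by auto
  have Xne: "X k \<noteq> xb" for k using xz unfolding X_def by auto
  have DC: "0 \<in> dir_coderiv_m ?Phi xb 0 u 0 lam"
    unfolding dir_coderiv_m_def dir_normal_cone_def
  proof (intro CollectI exI conjI allI)
    show "\<And>k. T k > 0" by (rule Tpos)
    show "T \<longlonglongrightarrow> 0"
      using tendsto_norm[OF tendsto_diff[OF Xl tendsto_const[of xb]]] unfolding T_def by simp
    show "(\<lambda>k. ((1 / T k) *\<^sub>R (X k - xb), (1 / T k) *\<^sub>R Y k)) \<longlonglongrightarrow> (u, 0)"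
      by (rule tendsto_Pair[OF Uq Yq])
    show "(\<lambda>k. (etas (s k), - lams (s k))) \<longlonglongrightarrow> (0, - lam)"
      by (rule tendsto_Pair[OF esl tendsto_minus[OF lsl]])
    fix k
    have "(xb, 0) + T k *\<^sub>R ((1 / T k) *\<^sub>R (X k - xb), (1 / T k) *\<^sub>R Y k) = (X k, Y k)"
      using Tpos[of k] by simp
    then show "(etas (s k), - lams (s k)) \<in> reg_normal_cone (graph_mult ?Phi) ((xb, 0) + T k *\<^sub>R ((1 / T k) *\<^sub>R (X k - xb), (1 / T k) *\<^sub>R Y k))"
      using RB unfolding reg_coderiv_m_def by simp
  qed
  have SG: "\<forall>k. \<forall>e\<in>E. inner lam e \<noteq> 0 \<longrightarrow> inner lam e * inner (Y k - 0) e > 0"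
    using rest unfolding Y_def Zs_def X_def by simp
  show ?thesis
    unfolding quasi_normal_dir_def not_not
    apply (rule exI[of _ lam])
    apply (intro conjI lam0 DC)
    apply (rule exI[of _ X], rule exI[of _ Y], rule exI[of _ "\<lambda>k. lams (s k)"], rule exI[of _ "\<lambda>k. etas (s k)"])
    using gr Xne Xl Yl lsl esl Uq Yq RB SG unfolding T_def by auto
qed

theorem mainTheorem5:
  fixes g :: "'a::euclidean_space \<Rightarrow> 'b::euclidean_space"
    and D :: "'b set" and xb u :: 'a and E :: "'b set"
    and Phi :: "'a \<Rightarrow> 'b set"
  assumes cont: "continuous_on UNIV g"
    and unit: "norm u = 1"
    and calm: "calm_in_dir g xb u"
    and closedD: "closed D"
    and Phi_def: "Phi = (\<lambda>x. {g x - d | d. d \<in> D})"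
    and in_gph: "(xb, 0) \<in> graph_mult Phi"
    and onb: "orthonormal_basis E"
  defines "Cond \<equiv> (\<exists>v lam. lam \<noteq> 0 \<and> lam \<in> dir_normal_cone D (g xb) v \<and>
              0 \<in> dir_coderiv g xb u v lam \<and>
              (\<exists>x z lams etas.
                 (\<forall>k. x k \<noteq> xb \<and> z k \<in> D) \<and>
                 x \<longlonglongrightarrow> xb \<and> z \<longlonglongrightarrow> g xb \<and> lams \<longlonglongrightarrow> lam \<and> etas \<longlonglongrightarrow> 0 \<and>
                 (\<lambda>k. (1 / norm (x k - xb)) *\<^sub>R (x k - xb)) \<longlonglongrightarrow> u \<and>
                 (\<lambda>k. (1 / norm (x k - xb)) *\<^sub>R (z k - g xb)) \<longlonglongrightarrow> v \<and>
                 (\<lambda>k. (1 / norm (x k - xb)) *\<^sub>R (g (x k) - g xb)) \<longlonglongrightarrow> v \<and>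
                 (\<forall>k. etas k \<in> reg_coderiv g (x k) (lams k) \<and>
                      lams k \<in> reg_normal_cone D (z k) \<and>
                      (\<forall>e\<in>E. inner lam e \<noteq> 0 \<longrightarrow> inner lam e * inner (g (x k) - z k) e > 0))))"
  shows "(\<not> Cond \<longrightarrow> quasi_normal_dir Phi xb 0 u E) \<and>
         ((\<exists>r>0. \<forall>x. norm (x - xb) < r \<longrightarrow> calm_at g x) \<longrightarrow>
            (\<not> Cond \<longleftrightarrow> quasi_normal_dir Phi xb 0 u E))"
proof -
  have d1: "\<not> Cond \<longrightarrow> quasi_normal_dir Phi xb 0 u E"
    using dir1[OF cont unit calm, of D E] unfolding Cond_def Phi_def by blast
  have d2: "(\<exists>r>0. \<forall>x. norm (x - xb) < r \<longrightarrow> calm_at g x) \<longrightarrow> Cond \<longrightarrow> \<not> quasi_normal_dir Phi xb 0 u E"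
    using dir2[OF cont, of xb D u E] unfolding Cond_def Phi_def by blast
  show ?thesis using d1 d2 by blast
qed

end
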